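(* Let $n,p\ge 1$, let $\tau\in[0,1]$, let $\eta\ge\varepsilon>0$, and let $(Q^\ast,Y^\ast,Z^\ast)$ be an optimal solution of the learner semidefinite program described in the context (for this $\eta$, $\varepsilon$, $\tau$). Fix an index $j\in\{1,\dots,2^p\}$ and, for $(A,B)\in\mathbb{R}^{n\times n}\times\mathbb{R}^{n\times p}$, let $$\Xi(A,B)=\begin{bmatrix}\tau Q^\ast & 0 & M(A,B)^\top\\ 0 & (1-\tau)I & 0\\ M(A,B) & 0 & Q^\ast\end{bmatrix},\qquad M(A,B)=AQ^\ast+BE_jY^\ast+BE_j^-Z^\ast .$$ Then there exists a constant $\ell=\ell(\varepsilon)\ge 0$ such that $$\bigl|\lambda_{\min}(\Xi(A,B))-\lambda_{\min}(\Xi(A+\Delta A,B+\Delta B))\bigr|\le \ell\bigl(\|\Delta A\|_{\mathrm{op}}+\|\Delta B\|_{\mathrm{op}}\bigr)$$ for every $(A,B)\in\Omega$ and every perturbation $(\Delta A,\Delta B)\in\mathbb{R}^{n\times n}\times\mathbb{R}^{n\times p}$.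
   Context: Consider the discrete-time control-affine system $x(t+1)=f(x(t))+g(x(t),\phi(t))u(t)$ with $x\in\mathscr D=\{x\in\mathbb{R}^n: Lx\le \mathbf 1_\ell\}$ ($L\in\mathbb{R}^{\ell\times n}$, $\mathrm{rank}(L)=\ell$, rows $l_i$), $u\in\mathscr U=\{u\in\mathbb{R}^p:|u|\le\bar u\}$ componentwise ($\bar u\in\mathbb{R}^p_+$), $f:\mathbb{R}^n\to\mathbb{R}^n$ and $g:\mathbb{R}^n\times[0,1]^p\to\mathbb{R}^{n\times p}$ of class $C^2$, and fault parameter $\phi\in\Phi=\{\phi\in[0,1]^p:\sum_{i=1}^p\mathds 1(\phi_i=1)\ge p-1\}$. $\Omega$ is the set of pairs $(A,B)$ with $A=\frac{df}{dx}(\bar x)$ and $B=g(\bar x,\bar\phi)$ for some $\bar x\in\mathscr D$, $\bar\phi\in\Phi$; $\Omega$ is assumed bounded (it is compact and connected). $\{E_j\}_{j=1}^{2^p}$ are all $p\times p$ diagonal matrices with entries in $\{0,1\}$, and $E_j^-=I-E_j$. $\|\cdot\|_{\mathrm{op}}$ is the operator norm induced by the Euclidean norm and $\lambda_{\min}$ the smallest eigenvalue of a symmetric matrix. The identity block $(1-\tau)I$ has a fixed dimension. Learner program: given finitely many pairs $(A_i,B_i)\in\Omega$, $i=1,\dots,V$ (the vertices of the convex hull of a finite sample set in $\Omega$), maximize $\mathrm{trace}(Q)$ over symmetric $Q\in\mathbb{R}^{n\times n}$, $Y,Z\in\mathbb{R}^{p\times n}$ subject to: $\begin{bmatrix}\tau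 Q & 0 & (A_iQ+B_iE_jY+B_iE_j^-Z)^\top\\ 0&(1-\tau)I&0\\ A_iQ+B_iE_jY+B_iE_j^-Z&0&Q\end{bmatrix}\succeq\varepsilon I$ for all $i=1,\dots,V$, $j=1,\dots,2^p$; $\begin{bmatrix}1& l_iQ\\ Ql_i^\top & Q\end{bmatrix}\succeq0$ for $i=1,\dots,\ell$; $\begin{bmatrix}\bar u_i^2 & z_i\\ z_i^\top & Q\end{bmatrix}\succeq 0$ for $i=1,\dots,p$, where $z_i$ is the $i$-th row of $Z$; $Q\preceq\eta I$; $Y\in\mathcal Y$, $Z\in\mathcal Z$, where $\mathcal Y,\mathcal Z\subset\mathbb{R}^{p\times n}$ are given nonempty, convex, compact sets. *)

theory Defs
  imports "HOL-Analysis.Analysis"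
begin

definition C1_on :: "'a::real_normed_vector set \<Rightarrow> ('a \<Rightarrow> 'b::real_normed_vector) \<Rightarrow> bool" where
  "C1_on U h \<longleftrightarrow> (\<exists>h'. (\<forall>x\<in>U. (h has_derivative blinfun_apply (h' x)) (at x)) \<and> continuous_on U h')"

definition C2_on :: "'a::real_normed_vector set \<Rightarrow> ('a \<Rightarrow> 'b::real_normed_vector) \<Rightarrow> bool" where
  "C2_on U h \<longleftrightarrow> (\<exists>h'. (\<forall>x\<in>U. (h has_derivative blinfun_apply (h' x)) (at x)) \<and> C1_on U h')"

definition psd :: "real^'k^'k \<Rightarrow> bool" where
  "psd X \<longleftrightarrow> (\<forall>v. 0 \<le> v \<bullet> (X *v v))"

text \<open>Smallest eigenvalue (used for symmetric matrices, whose eigenvalues are real).\<close>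
definition lambda_min :: "real^'k^'k \<Rightarrow> real" where
  "lambda_min X = Min {e. \<exists>v. v \<noteq> 0 \<and> X *v v = e *\<^sub>R v}"

definition opnorm :: "real^'c^'r \<Rightarrow> real" where
  "opnorm M = onorm (\<lambda>v. M *v v)"

text \<open>3x3 block matrix [[P,0,M^T],[0,R,0],[M,0,S]].\<close>
definition blk3 :: "real^'n^'n \<Rightarrow> real^'m^'m \<Rightarrow> real^'n^'n \<Rightarrow> real^'n^'n
    \<Rightarrow> real^(('n + 'm) + 'n)^(('n + 'm) + 'n)" where
  "blk3 P R M S = (\<chi> r c. case r of
      Inl (Inl i) \<Rightarrow> (case c of Inl (Inl k) \<Rightarrow> P$i$k | Inl (Inr k) \<Rightarrow> 0 | Inr k \<Rightarrow> M$k$i)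
    | Inl (Inr i) \<Rightarrow> (case c of Inl (Inl k) \<Rightarrow> 0 | Inl (Inr k) \<Rightarrow> R$i$k | Inr k \<Rightarrow> 0)
    | Inr i \<Rightarrow> (case c of Inl (Inl k) \<Rightarrow> M$i$k | Inl (Inr k) \<Rightarrow> 0 | Inr k \<Rightarrow> S$i$k))"

text \<open>2x2 block matrix [[c, w],[u, S]] with scalar c, row w, column u.\<close>
definition blk2 :: "real \<Rightarrow> real^'n \<Rightarrow> real^'n \<Rightarrow> real^'n^'n \<Rightarrow> real^(unit + 'n)^(unit + 'n)" where
  "blk2 c w u S = (\<chi> r s. case r of
      Inl _ \<Rightarrow> (case s of Inl _ \<Rightarrow> c | Inr k \<Rightarrow> w$k)
    | Inr i \<Rightarrow> (case s of Inl _ \<Rightarrow> u$i | Inr k \<Rightarrow> S$i$k))"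

text \<open>The set of all diagonal p x p matrices with entries in {0,1} (the E_j).\<close>
definition diag01 :: "(real^'p^'p) set" where
  "diag01 = {E. \<forall>i k. (i \<noteq> k \<longrightarrow> E$i$k = 0) \<and> (E$i$i = 0 \<or> E$i$i = 1)}"

definition Phi_set :: "(real^'p) set" where
  "Phi_set = {\<phi>. (\<forall>i. 0 \<le> \<phi>$i \<and> \<phi>$i \<le> 1) \<and> card {i. \<phi>$i = 1} \<ge> CARD('p) - 1}"

definition Dset :: "real^'n^'k \<Rightarrow> (real^'n) set" where
  "Dset L = {x. \<forall>i. (L *v x)$i \<le> 1}"

definition Omega :: "(real^'n \<Rightarrow> real^'n) \<Rightarrow> ((real^'n) \<times> (real^'p) \<Rightarrow> real^'p^'n) \<Rightarrow> real^'n^'k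
    \<Rightarrow> ((real^'n^'n) \<times> (real^'p^'n)) set" where
  "Omega f g L = {(jacobian f (at x), g (x, \<phi>)) | x \<phi>. x \<in> Dset L \<and> \<phi> \<in> Phi_set}"

definition learner_feasible ::
  "real \<Rightarrow> real \<Rightarrow> real \<Rightarrow> 'm::finite itself \<Rightarrow> ((real^'n^'n) \<times> (real^'p^'n)) set \<Rightarrow> real^'n^'k \<Rightarrow> real^'p
   \<Rightarrow> (real^'n^'p) set \<Rightarrow> (real^'n^'p) set \<Rightarrow> real^'n^'n \<Rightarrow> real^'n^'p \<Rightarrow> real^'n^'p \<Rightarrow> bool" where
  "learner_feasible \<tau> \<epsilon> \<eta> (_::'m::finite itself) VS L ubar Ys Zs Q Y Z \<longleftrightarrow>
     transpose Q = Q \<and>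
     (\<forall>(A,B)\<in>VS. \<forall>E\<in>diag01.
        psd (blk3 (\<tau> *\<^sub>R Q) ((1 - \<tau>) *\<^sub>R (mat 1 :: real^'m^'m))
                  (A ** Q + B ** E ** Y + B ** (mat 1 - E) ** Z) Q - \<epsilon> *\<^sub>R mat 1)) \<and>
     (\<forall>i. psd (blk2 1 ((L$i) v* Q) (Q *v (L$i)) Q)) \<and>
     (\<forall>i. psd (blk2 ((ubar$i)\<^sup>2) (Z$i) (Z$i) Q)) \<and>
     psd (\<eta> *\<^sub>R mat 1 - Q) \<and>
     Y \<in> Ys \<and> Z \<in> Zs"

definition learner_optimal ::
  "real \<Rightarrow> real \<Rightarrow> real \<Rightarrow> 'm::finite itself \<Rightarrow> ((real^'n^'n) \<times> (real^'p^'n)) set \<Rightarrow> real^'n^'k \<Rightarrow> real^'p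
   \<Rightarrow> (real^'n^'p) set \<Rightarrow> (real^'n^'p) set \<Rightarrow> real^'n^'n \<Rightarrow> real^'n^'p \<Rightarrow> real^'n^'p \<Rightarrow> bool" where
  "learner_optimal \<tau> \<epsilon> \<eta> m VS L ubar Ys Zs Q Y Z \<longleftrightarrow>
     learner_feasible \<tau> \<epsilon> \<eta> m VS L ubar Ys Zs Q Y Z \<and>
     (\<forall>Q' Y' Z'. learner_feasible \<tau> \<epsilon> \<eta> m VS L ubar Ys Zs Q' Y' Z' \<longrightarrow> trace Q' \<le> trace Q)"

end

theory Submission
  imports Defs
begin

lemma sym_inner:
  fixes X :: "real^'k^'k"
  assumes "transpose X = X"
  shows "v \<bullet> (X *v w) = (X *v v) \<bullet> w"
proof -
  have "v v* X = X *v v" by (metis assms transpose_matrix_vector)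
  thus ?thesis by (metis dot_lmul_matrix)
qed

lemma psd_null:
  fixes P :: "real^'k^'k"
  assumes sym: "transpose P = P" and pos: "\<And>w. 0 \<le> w \<bullet> (P *v w)" and z: "v \<bullet> (P *v v) = 0"
  shows "P *v v = 0"
proof (rule ccontr)
  assume ne: "P *v v \<noteq> 0"
  define w where "w = P *v v"
  define q where "q = w \<bullet> w"
  define k where "k = w \<bullet> (P *v w)"
  have q: "q > 0" using ne unfolding q_def w_def by simp
  have k: "k \<ge> 0" using pos unfolding k_def by simp
  define s where "s = q / (k + 1)"
  have s: "s > 0" using q k unfolding s_def by simp
  have "0 \<le> (v - s *\<^sub>R w) \<bullet> (P *v (v - s *\<^sub>R w))" by (rule pos)
  also have "\<dots> = v \<bullet> (P *v v) - 2 * s * q + s * s * k"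
    using sym_inner[OF sym, of v w]
    by (simp add: matrix_vector_mult_diff_distrib matrix_vector_mult_scaleR inner_diff_left inner_diff_right
        algebra_simps q_def k_def w_def inner_commute)
  also have "\<dots> = s * (s * k - 2 * q)" using z by (simp add: algebra_simps)
  finally have "0 \<le> s * k - 2 * q" using s by (simp add: zero_le_mult_iff)
  moreover have "s * k < q"
  proof -
    have "s * k = q * (k / (k+1))" unfolding s_def by simp
    also have "\<dots> < q * 1" using q k by (intro mult_strict_left_mono) auto
    finally show ?thesis by simp
  qed
  ultimately show False using q by linarith
qed

lemma eig_ge:
  fixes X :: "real^'k^'k"
  assumes "\<And>w. norm w = 1 \<Longrightarrow> m \<le> w \<bullet> (X *v w)" and "v \<noteq> 0" and "X *v v = e *\<^sub>R v"
  shows "m \<le> e"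
proof -
  define u where "u = v /\<^sub>R norm v"
  have nu: "norm u = 1" using assms(2) unfolding u_def by simp
  have "u \<bullet> (X *v u) = e * (u \<bullet> u)" unfolding u_def using assms(3)
    by (simp add: matrix_vector_mult_scaleR)
  also have "u \<bullet> u = 1" using nu by (simp add: dot_square_norm)
  finally show ?thesis using assms(1)[OF nu] by simp
qed

lemma eig_finite:
  fixes X :: "real^'k^'k"
  assumes sym: "transpose X = X"
  shows "finite {e. \<exists>v. v \<noteq> 0 \<and> X *v v = e *\<^sub>R v}" (is "finite ?E")
proof -
  define ev where "ev e = (SOME v. v \<noteq> 0 \<and> X *v v = e *\<^sub>R v)" for e
  have ev: "ev e \<noteq> 0 \<and> X *v ev e = e *\<^sub>R ev e" if "e \<in> ?E" for e
  proof -
    from that have "\<exists>v. v \<noteq> 0 \<and> X *v v = e *\<^sub>R v" by (rule CollectD)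
    then obtain v where "v \<noteq> 0 \<and> X *v v = e *\<^sub>R v" by (rule exE)
    then show ?thesis unfolding ev_def by (rule someI)
  qed
  have inj: "inj_on ev ?E"
  proof (rule inj_onI)
    fix a b assume a: "a \<in> ?E" and b: "b \<in> ?E" and eq: "ev a = ev b"
    have "a *\<^sub>R ev a = X *v ev a" using ev[OF a] by simp
    also have "\<dots> = X *v ev b" using eq by simp
    also have "\<dots> = b *\<^sub>R ev b" using ev[OF b] by simp
    finally have "a *\<^sub>R ev a = b *\<^sub>R ev a" using eq by simp
    thus "a = b" using ev[OF a] by simp
  qed
  have orth: "pairwise orthogonal (ev ` ?E)"
  unfolding pairwise_def
  proof (intro ballI impI)
    fix x y assume x: "x \<in> ev ` ?E" and y: "y \<in> ev ` ?E" and ne: "x \<noteq> y"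
    obtain a where xa: "x = ev a" and a: "a \<in> ?E" using x by (rule imageE)
    obtain b where yb: "y = ev b" and b: "b \<in> ?E" using y by (rule imageE)
    from ne have ne: "ev a \<noteq> ev b" using xa yb by simp
    show "orthogonal x y" unfolding xa yb
    proof -
    have "a \<noteq> b" using ne by auto
    have "ev a \<bullet> (X *v ev b) = (X *v ev a) \<bullet> ev b" by (rule sym_inner[OF sym])
    hence "b * (ev a \<bullet> ev b) = a * (ev a \<bullet> ev b)" using ev[OF a] ev[OF b] by simp
    hence "ev a \<bullet> ev b = 0" using \<open>a \<noteq> b\<close> by simp
    thus "orthogonal (ev a) (ev b)" by (simp add: orthogonal_def)
    qed
  qed
  have "0 \<notin> ev ` ?E"
  proof
    assume "0 \<in> ev ` ?E"
    then obtain e where "0 = ev e" "e \<in> ?E" by (rule imageE)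
    with ev[of e] show False by simp
  qed
  hence "independent (ev ` ?E)" by (rule pairwise_orthogonal_independent[OF orth])
  hence "finite (ev ` ?E)" by (rule independent_imp_finite)
  thus ?thesis by (rule finite_imageD[OF _ inj])
qed


lemma lambda_min_char:
  fixes X :: "real^'k^'k"
  assumes sym: "transpose X = X"
  shows "(\<exists>v. norm v = 1 \<and> v \<bullet> (X *v v) = lambda_min X) \<and> (\<forall>v. norm v = 1 \<longrightarrow> lambda_min X \<le> v \<bullet> (X *v v))"
proof -
  have "\<exists>x\<in>sphere 0 1. \<forall>y\<in>sphere 0 1. x \<bullet> (X *v x) \<le> y \<bullet> (X *v y)"
  proof (rule continuous_attains_inf)
    show "compact (sphere (0::real^'k) 1)" by simp
    obtain x :: "real^'k" where "norm x = 1" using vector_choose_size[of 1] by auto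
    thus "sphere (0::real^'k) 1 \<noteq> {}" by auto
    show "continuous_on (sphere 0 1) (\<lambda>x. x \<bullet> (X *v x))"
      by (intro continuous_intros linear_continuous_on bounded_linear.linear matrix_vector_mul_bounded_linear)
  qed
  then obtain v0 where v0: "norm v0 = 1" and mn: "\<And>y. norm y = 1 \<Longrightarrow> v0 \<bullet> (X *v v0) \<le> y \<bullet> (X *v y)"
    by auto
  define m where "m = v0 \<bullet> (X *v v0)"
  define P where "P = X - m *\<^sub>R mat 1"
  have Xs: "X $ j $ i = X $ i $ j" for i j
    using arg_cong[OF sym, of "\<lambda>M. M $ i $ j"] by (simp add: transpose_def)
  have Psym: "transpose P = P" unfolding P_def
    by (simp add: transpose_def mat_def vec_eq_iff Xs)
  have Pv: "P *v w = X *v w - m *\<^sub>R w" for w unfolding P_def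
    by (simp add: matrix_vector_mult_diff_rdistrib scaleR_matrix_vector_assoc[symmetric])
  have pos: "0 \<le> w \<bullet> (P *v w)" for w
  proof (cases "w = 0")
    case True thus ?thesis by simp
  next
    case False
    define u where "u = w /\<^sub>R norm w"
    have nu: "norm u = 1" using False unfolding u_def by simp
    have "m \<le> u \<bullet> (X *v u)" using mn[OF nu] unfolding m_def .
    also have "u \<bullet> (X *v u) = (w \<bullet> (X *v w)) / (norm w)^2" unfolding u_def
      by (simp add: matrix_vector_mult_scaleR power2_eq_square field_simps)
    finally have "m * (norm w)^2 \<le> w \<bullet> (X *v w)" using False by (simp add: field_simps)
    thus ?thesis by (simp add: Pv inner_diff_right dot_square_norm)
  qed
  have z: "v0 \<bullet> (P *v v0) = 0" using v0 by (simp add: Pv inner_diff_right dot_square_norm m_def)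
  have "P *v v0 = 0" by (rule psd_null[OF Psym pos z])
  hence ev0: "X *v v0 = m *\<^sub>R v0" by (simp add: Pv)
  have v00: "v0 \<noteq> 0" using v0 by auto
  have ge: "\<And>e. e \<in> {e. \<exists>v. v \<noteq> 0 \<and> X *v v = e *\<^sub>R v} \<Longrightarrow> m \<le> e"
    using eig_ge[of m X] mn unfolding m_def by blast
  have "lambda_min X = m" unfolding lambda_min_def
    apply (rule Min_eqI[OF eig_finite[OF sym]])
    using ge ev0 v00 by auto
  thus ?thesis using v0 mn unfolding m_def by auto
qed

lemma lambda_min_lip:
  fixes X1 X2 :: "real^'k^'k"
  assumes "transpose X1 = X1" "transpose X2 = X2"
    and d: "\<And>v. norm v = 1 \<Longrightarrow> \<bar>v \<bullet> (X1 *v v) - v \<bullet> (X2 *v v)\<bar> \<le> d"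
  shows "\<bar>lambda_min X1 - lambda_min X2\<bar> \<le> d"
proof -
  obtain v1 where v1: "norm v1 = 1" "v1 \<bullet> (X1 *v v1) = lambda_min X1"
    using lambda_min_char[OF assms(1)] by blast
  obtain v2 where v2: "norm v2 = 1" "v2 \<bullet> (X2 *v v2) = lambda_min X2"
    using lambda_min_char[OF assms(2)] by blast
  have "lambda_min X1 \<le> v2 \<bullet> (X1 *v v2)" using lambda_min_char[OF assms(1)] v2 by blast
  moreover have "lambda_min X2 \<le> v1 \<bullet> (X2 *v v1)" using lambda_min_char[OF assms(2)] v1 by blast
  moreover note d[OF v1(1)] d[OF v2(1)]
  ultimately show ?thesis using v1 v2 by linarith
qed

lemma sum_UNIV_Plus:
  fixes f :: "('a::finite + 'b::finite) \<Rightarrow> 'c::comm_monoid_add"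
  shows "sum f UNIV = sum (\<lambda>i. f (Inl i)) UNIV + sum (\<lambda>i. f (Inr i)) UNIV"
proof -
  have "sum f UNIV = sum f (UNIV <+> UNIV)" by simp
  also have "\<dots> = sum (f \<circ> Inl) UNIV + sum (f \<circ> Inr) UNIV" by (rule sum.Plus) auto
  finally show ?thesis by (simp add: o_def)
qed

lemma blk3_quad:
  fixes v :: "real^(('n::finite + 'm::finite) + 'n)"
  defines "a \<equiv> \<chi> i. v $ Inl (Inl i)" and "b \<equiv> \<chi> i. v $ Inl (Inr i)" and "c \<equiv> \<chi> i. v $ Inr i"
  shows "v \<bullet> (blk3 P R M S *v v) = a \<bullet> (P *v a) + b \<bullet> (R *v b) + 2 * (c \<bullet> (M *v a)) + c \<bullet> (S *v c)"
    and "(norm v)^2 = (norm a)^2 + (norm b)^2 + (norm c)^2"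
proof -
  show "(norm v)^2 = (norm a)^2 + (norm b)^2 + (norm c)^2"
    unfolding power2_norm_eq_inner inner_vec_def a_def b_def c_def
    by (simp add: sum_UNIV_Plus)
  have tr: "a \<bullet> (transpose M *v c) = c \<bullet> (M *v a)"
    by (metis dot_lmul_matrix inner_commute transpose_matrix_vector)
  have ha: "v $ Inl (Inl i) = a $ i" for i by (simp add: a_def)
  have hb: "v $ Inl (Inr i) = b $ i" for i by (simp add: b_def)
  have hc: "v $ Inr i = c $ i" for i by (simp add: c_def)
  have e1: "(blk3 P R M S *v v) $ Inl (Inl i) = (P *v a) $ i + (transpose M *v c) $ i" for i
    unfolding matrix_vector_mult_def a_def b_def c_def blk3_def transpose_def
    by (simp add: sum_UNIV_Plus)
  have e2: "(blk3 P R M S *v v) $ Inl (Inr i) = (R *v b) $ i" for i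
    unfolding matrix_vector_mult_def a_def b_def c_def blk3_def
    by (simp add: sum_UNIV_Plus)
  have e3: "(blk3 P R M S *v v) $ Inr i = (M *v a) $ i + (S *v c) $ i" for i
    unfolding matrix_vector_mult_def a_def b_def c_def blk3_def
    by (simp add: sum_UNIV_Plus)
  have "v \<bullet> (blk3 P R M S *v v) = a \<bullet> (P *v a + transpose M *v c) + b \<bullet> (R *v b) + c \<bullet> (M *v a + S *v c)"
    unfolding inner_vec_def
    by (simp add: sum_UNIV_Plus e1 e2 e3 ha hb hc)
  moreover have "a \<bullet> (P *v a + transpose M *v c) + b \<bullet> (R *v b) + c \<bullet> (M *v a + S *v c)
     = a \<bullet> (P *v a) + b \<bullet> (R *v b) + a \<bullet> (transpose M *v c) + c \<bullet> (M *v a) + c \<bullet> (S *v c)"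
    by (simp add: inner_add_right)
  ultimately show "v \<bullet> (blk3 P R M S *v v) = a \<bullet> (P *v a) + b \<bullet> (R *v b) + 2 * (c \<bullet> (M *v a)) + c \<bullet> (S *v c)"
    using tr by simp
qed

lemma blk3_entry:
  "blk3 P R M S $ Inl (Inl i) $ Inl (Inl k) = P $ i $ k"
  "blk3 P R M S $ Inl (Inl i) $ Inl (Inr k') = 0"
  "blk3 P R M S $ Inl (Inl i) $ Inr k = M $ k $ i"
  "blk3 P R M S $ Inl (Inr i') $ Inl (Inl k) = 0"
  "blk3 P R M S $ Inl (Inr i') $ Inl (Inr k') = R $ i' $ k'"
  "blk3 P R M S $ Inl (Inr i') $ Inr k = 0"
  "blk3 P R M S $ Inr i $ Inl (Inl k) = M $ i $ k"
  "blk3 P R M S $ Inr i $ Inl (Inr k') = 0"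
  "blk3 P R M S $ Inr i $ Inr k = S $ i $ k"
  by (simp_all add: blk3_def)

lemma blk3_sym:
  assumes "transpose P = P" "transpose R = R" "transpose S = S"
  shows "transpose (blk3 P R M S) = blk3 P R M S"
proof -
  have P: "P $ j $ i = P $ i $ j" for i j
    using arg_cong[OF assms(1), of "\<lambda>M. M $ i $ j"] by (simp add: transpose_def)
  have R: "R $ j $ i = R $ i $ j" for i j
    using arg_cong[OF assms(2), of "\<lambda>M. M $ i $ j"] by (simp add: transpose_def)
  have S: "S $ j $ i = S $ i $ j" for i j
    using arg_cong[OF assms(3), of "\<lambda>M. M $ i $ j"] by (simp add: transpose_def)
  have "\<forall>r s. blk3 P R M S $ s $ r = blk3 P R M S $ r $ s"
    by (simp only: split_sum_all blk3_entry P R S) simp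
  then show ?thesis unfolding transpose_def by (simp add: vec_eq_iff)
qed


lemma matrix_add_rdistrib': "(A + B) ** C = A ** C + B ** (C :: 'a::semiring_1^'n^'k)"
  by (simp add: matrix_matrix_mult_def vec_eq_iff sum.distrib algebra_simps)

lemma opnorm_bound: "norm (M *v x) \<le> opnorm M * norm x"
  unfolding opnorm_def by (rule onorm[OF matrix_vector_mul_bounded_linear])

lemma opnorm_nonneg: "0 \<le> opnorm M"
  unfolding opnorm_def by (rule onorm_pos_le[OF matrix_vector_mul_bounded_linear])

lemma opnorm_bound2: "norm x \<le> 1 \<Longrightarrow> norm (M *v (N *v x)) \<le> opnorm M * opnorm N"
proof -
  assume x: "norm x \<le> 1"
  have "norm (M *v (N *v x)) \<le> opnorm M * norm (N *v x)" by (rule opnorm_bound)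
  also have "\<dots> \<le> opnorm M * (opnorm N * norm x)"
    by (rule mult_left_mono[OF opnorm_bound opnorm_nonneg])
  also have "\<dots> \<le> opnorm M * (opnorm N * 1)"
    by (intro mult_left_mono x opnorm_nonneg)
  finally show ?thesis by simp
qed

lemma key_bound:
  fixes Q :: "real^'n^'n" and R :: "real^'m^'m"
  assumes Qs: "transpose Q = Q" and Rs: "transpose R = R"
  shows "\<bar>lambda_min (blk3 (\<tau> *\<^sub>R Q) R (A ** Q + B ** E ** Y + B ** (mat 1 - E) ** Z) Q)
      - lambda_min (blk3 (\<tau> *\<^sub>R Q) R ((A + dA) ** Q + (B + dB) ** E ** Y + (B + dB) ** (mat 1 - E) ** Z) Q)\<bar>
     \<le> (2 * (opnorm Q + opnorm (E ** Y) + opnorm ((mat 1 - E) ** Z))) * (opnorm dA + opnorm dB)"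
proof -
  define M1 where "M1 = A ** Q + B ** E ** Y + B ** (mat 1 - E) ** Z"
  define M2 where "M2 = (A + dA) ** Q + (B + dB) ** E ** Y + (B + dB) ** (mat 1 - E) ** Z"
  define C where "C = opnorm Q + opnorm (E ** Y) + opnorm ((mat 1 - E) ** Z)"
  have tQ: "transpose (\<tau> *\<^sub>R Q) = \<tau> *\<^sub>R Q" by (simp add: transpose_scalar Qs)
  have D: "M2 - M1 = dA ** Q + dB ** (E ** Y) + dB ** ((mat 1 - E) ** Z)"
    unfolding M1_def M2_def by (simp add: matrix_add_rdistrib' matrix_mul_assoc algebra_simps)
  have "\<bar>lambda_min (blk3 (\<tau> *\<^sub>R Q) R M1 Q) - lambda_min (blk3 (\<tau> *\<^sub>R Q) R M2 Q)\<bar>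
        \<le> 2 * C * (opnorm dA + opnorm dB)"
  proof (rule lambda_min_lip[OF blk3_sym[OF tQ Rs Qs] blk3_sym[OF tQ Rs Qs]])
    fix v :: "real^(('n + 'm) + 'n)"
    assume v: "norm v = 1"
    define a :: "real^'n" where "a = (\<chi> i. v $ Inl (Inl i))"
    define b :: "real^'m" where "b = (\<chi> i. v $ Inl (Inr i))"
    define c :: "real^'n" where "c = (\<chi> i. v $ Inr i)"
    have q1: "v \<bullet> (blk3 (\<tau> *\<^sub>R Q) R M1 Q *v v) = a \<bullet> ((\<tau> *\<^sub>R Q) *v a) + b \<bullet> (R *v b) + 2 * (c \<bullet> (M1 *v a)) + c \<bullet> (Q *v c)"
      unfolding a_def b_def c_def by (rule blk3_quad(1))
    have q2: "v \<bullet> (blk3 (\<tau> *\<^sub>R Q) R M2 Q *v v) = a \<bullet> ((\<tau> *\<^sub>R Q) *v a) + b \<bullet> (R *v b) + 2 * (c \<bullet> (M2 *v a)) + c \<bullet> (Q *v c)"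
      unfolding a_def b_def c_def by (rule blk3_quad(1))
    have nv: "(norm v)^2 = (norm a)^2 + (norm b)^2 + (norm c)^2"
      unfolding a_def b_def c_def by (rule blk3_quad(2))
    have s1: "(norm a)^2 + (norm b)^2 + (norm c)^2 = 1" using nv v by simp
    have na: "norm a \<le> 1"
    proof -
      have "(norm a)^2 \<le> (1::real)" using s1 zero_le_power2[of "norm a"] zero_le_power2[of "norm b"] zero_le_power2[of "norm c"] by linarith
      thus ?thesis using abs_square_le_1[of "norm a"] by simp
    qed
    have nc: "norm c \<le> 1"
    proof -
      have "(norm c)^2 \<le> (1::real)" using s1 zero_le_power2[of "norm a"] zero_le_power2[of "norm b"] zero_le_power2[of "norm c"] by linarith
      thus ?thesis using abs_square_le_1[of "norm c"] by simp
    qed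
    have diff: "v \<bullet> (blk3 (\<tau> *\<^sub>R Q) R M1 Q *v v) - v \<bullet> (blk3 (\<tau> *\<^sub>R Q) R M2 Q *v v)
       = - 2 * (c \<bullet> ((M2 - M1) *v a))"
      unfolding q1 q2 by (simp add: matrix_vector_mult_diff_rdistrib inner_diff_right algebra_simps)
    have Dv: "(M2 - M1) *v a = dA *v (Q *v a) + dB *v ((E ** Y) *v a) + dB *v (((mat 1 - E) ** Z) *v a)"
      unfolding D by (simp add: matrix_vector_mult_add_rdistrib matrix_vector_mul_assoc)
    have "norm ((M2 - M1) *v a) \<le> norm (dA *v (Q *v a)) + norm (dB *v ((E ** Y) *v a)) + norm (dB *v (((mat 1 - E) ** Z) *v a))"
      unfolding Dv by (meson norm_triangle_le order_refl add_mono)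
    also have "\<dots> \<le> opnorm dA * opnorm Q + opnorm dB * opnorm (E ** Y) + opnorm dB * opnorm ((mat 1 - E) ** Z)"
      by (intro add_mono opnorm_bound2 na)
    also have "\<dots> \<le> C * (opnorm dA + opnorm dB)"
    proof -
      have "opnorm dA * opnorm Q \<le> opnorm dA * C"
        unfolding C_def by (intro mult_left_mono) (simp_all add: opnorm_nonneg)
      moreover have "opnorm dB * opnorm (E ** Y) + opnorm dB * opnorm ((mat 1 - E) ** Z) \<le> opnorm dB * C"
        unfolding C_def distrib_left[symmetric] by (intro mult_left_mono) (simp_all add: opnorm_nonneg)
      ultimately show ?thesis by (simp add: algebra_simps)
    qed
    finally have nD: "norm ((M2 - M1) *v a) \<le> C * (opnorm dA + opnorm dB)" .
    have "\<bar>c \<bullet> ((M2 - M1) *v a)\<bar> \<le> norm c * norm ((M2 - M1) *v a)" by (rule Cauchy_Schwarz_ineq2)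
    also have "\<dots> \<le> 1 * norm ((M2 - M1) *v a)" by (intro mult_right_mono nc) simp
    finally have "\<bar>c \<bullet> ((M2 - M1) *v a)\<bar> \<le> C * (opnorm dA + opnorm dB)" using nD by simp
    thus "\<bar>v \<bullet> (blk3 (\<tau> *\<^sub>R Q) R M1 Q *v v) - v \<bullet> (blk3 (\<tau> *\<^sub>R Q) R M2 Q *v v)\<bar> \<le> 2 * C * (opnorm dA + opnorm dB)"
      unfolding diff by simp
  qed
  thus ?thesis unfolding M1_def M2_def C_def by simp
qed

theorem theorem1:
  fixes f :: "real^'n \<Rightarrow> real^'n"
    and g :: "(real^'n) \<times> (real^'p) \<Rightarrow> real^'p^'n"
    and L :: "real^'n^'k"
    and ubar :: "real^'p"
    and S :: "((real^'n^'n) \<times> (real^'p^'n)) set"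
    and Ys Zs :: "(real^'n^'p) set"
    and \<tau> \<epsilon> \<eta> :: real
    and Q :: "real^'n^'n" and Y Z :: "real^'n^'p"
    and E :: "real^'p^'p"
  assumes f_C2: "C2_on UNIV f"
    and g_C2: "\<exists>U. open U \<and> UNIV \<times> {\<phi>. \<forall>i. 0 \<le> \<phi>$i \<and> \<phi>$i \<le> 1} \<subseteq> U \<and> C2_on U g"
    and L_rank: "rank L = CARD('k)"
    and ubar_nonneg: "\<forall>i. 0 \<le> ubar$i"
    and Omega_bdd: "bounded (Omega f g L)"
    and S_fin: "finite S" and S_sub: "S \<subseteq> Omega f g L"
    and Ys: "Ys \<noteq> {}" "convex Ys" "compact Ys"
    and Zs: "Zs \<noteq> {}" "convex Zs" "compact Zs"
    and tau: "0 \<le> \<tau>" "\<tau> \<le> 1"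
    and eps: "0 < \<epsilon>" "\<epsilon> \<le> \<eta>"
    and opt: "learner_optimal \<tau> \<epsilon> \<eta> TYPE('m) {v. v extreme_point_of (convex hull S)}
                L ubar Ys Zs Q Y Z"
    and E: "E \<in> diag01"
  shows "\<exists>l\<ge>0. \<forall>(A, B)\<in>Omega f g L. \<forall>dA dB.
     \<bar>lambda_min (blk3 (\<tau> *\<^sub>R Q) ((1 - \<tau>) *\<^sub>R (mat 1 :: real^'m^'m))
                        (A ** Q + B ** E ** Y + B ** (mat 1 - E) ** Z) Q)
      - lambda_min (blk3 (\<tau> *\<^sub>R Q) ((1 - \<tau>) *\<^sub>R (mat 1 :: real^'m^'m))
                        ((A + dA) ** Q + (B + dB) ** E ** Y + (B + dB) ** (mat 1 - E) ** Z) Q)\<bar>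
     \<le> l * (opnorm dA + opnorm dB)"
  proof -
  have Qs: "transpose Q = Q" using opt unfolding learner_optimal_def learner_feasible_def by blast
  have Rs: "transpose ((1 - \<tau>) *\<^sub>R (mat 1 :: real^'m^'m)) = (1 - \<tau>) *\<^sub>R mat 1"
    by (simp add: transpose_scalar)
  have C0: "0 \<le> 2 * (opnorm Q + opnorm (E ** Y) + opnorm ((mat 1 - E) ** Z))"
    by (simp add: opnorm_nonneg)
  show ?thesis
    using C0 key_bound[OF Qs Rs] by blast
qed

end
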